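(* Let $f:X\to\mathcal G$ be a convex function and $x_0\in\operatorname{dom} f$. Then $x_0$ solves the strict scalarized Stampacchia inequality, i.e. $$\forall x\in X,\ \forall z^*\in C^-\setminus\{0\}:\quad \varphi_{f,z^*}(x_0)=-\infty\ \text{ or }\ 0\le \varphi'_{f,z^*}(x_0,x-x_0),$$ if and only if $f(x_0)=\inf f[X]$.
   Context: $X$ is a real linear space and $Z$ a real locally convex Hausdorff space with topological dual $Z^*$. $C\subseteq Z$ is a closed convex cone with $0\in C$ such that $C^-=\{z^*\in Z^*: z^*(c)\le 0\ \forall c\in C\}$ satisfies $C^-\setminus\{0\}\ne\emptyset$. Let $\mathcal G=\{A\subseteq Z: A=\operatorname{cl}\operatorname{co}(A+C)\}$ (it contains $\emptyset$ and $Z$). For $A,B\in\mathcal G$: $A\oplus B=\operatorname{cl}\{a+b: a\in A,b\in B\}$, $tA=\{ta:a\in A\}$ for $t>0$. A function $f:X\to\mathcal G$ is convex if $f(tx_1+(1-t)x_2)\supseteq tf(x_1)\oplus(1-t)f(x_2)$ for all $x_1,x_2\in X$, $t\in(0,1)$; $\operatorname{dom} f=\{x: f(x)\neq\emptyset\}$; $\inf f[X]=\operatorname{cl}\operatorname{co}\bigcup_{x\in X}f(x)$. On $\overline{\mathbb R}=\mathbb R\cup\{\pm\infty\}$ use the inf-addition $\dot+$ (usual sum, with $r\dot+(+\infty)=+\infty$ for every $r$, in particular $(-\infty)\dot+(+\infty)=+\infty$) and the inf-residuation $r\ominus s=\inf\{t\in\mathbb R: r\le s\dot+ t\}$ (with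 $\inf\emptyset=+\infty$); $\frac1t(\pm\infty)=\pm\infty$ for $t>0$. For $z^*\in C^-\setminus\{0\}$, $\varphi_{f,z^*}(x)=\inf\{-z^*(z): z\in f(x)\}$ (equal to $+\infty$ if $f(x)=\emptyset$). For $\varphi:X\to\overline{\mathbb R}$, $\varphi'(x,u)=\inf_{t>0}\frac1t\big(\varphi(x+tu)\ominus\varphi(x)\big)$; $\varphi'_{f,z^*}$ denotes this derivative of $\varphi_{f,z^*}$. *)

theory Defs
  imports "HOL-Analysis.Analysis" "HOL-Library.Extended_Real"
begin

text \<open>Real locally convex Hausdorff topological vector space structure on the type 'z
  (Hausdorff is given by the sort t2_space).\<close>
definition lc_tvs :: "'z::{real_vector,t2_space} itself \<Rightarrow> bool" where
  "lc_tvs _ \<longleftrightarrow>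
     continuous_on UNIV (\<lambda>p::'z \<times> 'z. fst p + snd p) \<and>
     continuous_on UNIV (\<lambda>p::real \<times> 'z. fst p *\<^sub>R snd p) \<and>
     (\<forall>U::'z set. open U \<and> 0 \<in> U \<longrightarrow> (\<exists>V. open V \<and> convex V \<and> 0 \<in> V \<and> V \<subseteq> U))"

definition top_dual :: "('z::{real_vector,topological_space} \<Rightarrow> real) set" where
  "top_dual = {zs. linear zs \<and> continuous_on UNIV zs}"

definition neg_dual_cone :: "'z::{real_vector,topological_space} set \<Rightarrow> ('z \<Rightarrow> real) set" where
  "neg_dual_cone C = {zs \<in> top_dual. \<forall>c\<in>C. zs c \<le> 0}"

definition closed_convex_cone :: "'z::{real_vector,topological_space} set \<Rightarrow> bool" where
  "closed_convex_cone C \<longleftrightarrow> closed C \<and> convex C \<and> cone C \<and> 0 \<in> C"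

definition Gspace :: "'z::{real_vector,topological_space} set \<Rightarrow> 'z set set" where
  "Gspace C = {A. A = closure (convex hull {a + c | a c. a \<in> A \<and> c \<in> C})}"

definition oplus_set :: "'z::{real_vector,topological_space} set \<Rightarrow> 'z set \<Rightarrow> 'z set" where
  "oplus_set A B = closure {a + b | a b. a \<in> A \<and> b \<in> B}"

definition G_convex :: "'z::{real_vector,topological_space} set \<Rightarrow> ('x::real_vector \<Rightarrow> 'z set) \<Rightarrow> bool" where
  "G_convex C f \<longleftrightarrow> (\<forall>x. f x \<in> Gspace C) \<and>
     (\<forall>x1 x2 t. 0 < t \<and> t < 1 \<longrightarrow>
        oplus_set ((\<lambda>z. t *\<^sub>R z) ` f x1) ((\<lambda>z. (1 - t) *\<^sub>R z) ` f x2)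
          \<subseteq> f (t *\<^sub>R x1 + (1 - t) *\<^sub>R x2))"

definition dom_G :: "('x \<Rightarrow> 'z set) \<Rightarrow> 'x set" where
  "dom_G f = {x. f x \<noteq> {}}"

definition inf_image :: "('x \<Rightarrow> 'z::{real_vector,topological_space} set) \<Rightarrow> 'z set" where
  "inf_image f = closure (convex hull (\<Union>x. f x))"

definition inf_add :: "ereal \<Rightarrow> ereal \<Rightarrow> ereal" where
  "inf_add r s = (if r = \<infinity> \<or> s = \<infinity> then \<infinity>
                  else if r = -\<infinity> \<or> s = -\<infinity> then -\<infinity>
                  else ereal (real_of_ereal r + real_of_ereal s))"

definition inf_res :: "ereal \<Rightarrow> ereal \<Rightarrow> ereal" where
  "inf_res r s = Inf {ereal t | t. r \<le> inf_add s (ereal t)}"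

definition scal_fun :: "('x \<Rightarrow> 'z set) \<Rightarrow> ('z \<Rightarrow> real) \<Rightarrow> 'x \<Rightarrow> ereal" where
  "scal_fun f zs x = Inf {ereal (- zs z) | z. z \<in> f x}"

definition dir_deriv :: "('x::real_vector \<Rightarrow> ereal) \<Rightarrow> 'x \<Rightarrow> 'x \<Rightarrow> ereal" where
  "dir_deriv \<phi> x u = (INF t\<in>{0<..}. ereal (1 / t) * inf_res (\<phi> (x + t *\<^sub>R u)) (\<phi> x))"

end

theory Submission
  imports Defs "HOL-Analysis.Analysis"
begin


definition hb_ok :: "('z::real_vector \<Rightarrow> real) \<Rightarrow> ('z \<times> real) set \<Rightarrow> bool" where
  "hb_ok p G \<longleftrightarrow> (\<forall>x a y b. (x,a)\<in>G \<longrightarrow> (y,b)\<in>G \<longrightarrow> (x+y, a+b) \<in> G) \<and>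
     (\<forall>x a c. (x,a)\<in>G \<longrightarrow> (c *\<^sub>R x, c*a) \<in> G) \<and>
     (\<forall>x a b. (x,a)\<in>G \<longrightarrow> (x,b)\<in>G \<longrightarrow> a = b) \<and>
     (\<forall>x a. (x,a)\<in>G \<longrightarrow> a \<le> p x)"

lemma hb_okD:
  assumes "hb_ok p G"
  shows hb_add: "\<And>x a y b. (x,a)\<in>G \<Longrightarrow> (y,b)\<in>G \<Longrightarrow> (x+y, a+b) \<in> G"
    and hb_sc: "\<And>x a c. (x,a)\<in>G \<Longrightarrow> (c *\<^sub>R x, c*a) \<in> G"
    and hb_fun: "\<And>x a b. (x,a)\<in>G \<Longrightarrow> (x,b)\<in>G \<Longrightarrow> a = b"
    and hb_p: "\<And>x a. (x,a)\<in>G \<Longrightarrow> a \<le> p x"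
  using assms unfolding hb_ok_def by blast+

lemma hb_chain:
  assumes "C \<in> chains {G. hb_ok p G \<and> G0 \<subseteq> G}" "C \<noteq> {}"
  shows "hb_ok p (\<Union>C) \<and> G0 \<subseteq> \<Union>C"
proof -
  have sub: "C \<subseteq> {G. hb_ok p G \<and> G0 \<subseteq> G}" and ch: "\<And>A B. A\<in>C \<Longrightarrow> B\<in>C \<Longrightarrow> A \<subseteq> B \<or> B \<subseteq> A"
    using assms(1) unfolding chains_def chain_subset_def by blast+
  have two: "\<exists>G\<in>C. u \<in> G \<and> v \<in> G" if uu: "u \<in> \<Union>C" and vv: "v \<in> \<Union>C" for u v
  proof -
    obtain A where A: "A\<in>C" "u\<in>A" using uu by (rule UnionE)
    obtain B where B: "B\<in>C" "v\<in>B" using vv by (rule UnionE)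
    show ?thesis
    proof (cases "A \<subseteq> B")
      case True then show ?thesis using A B by blast
    next
      case False then have "B \<subseteq> A" using ch[OF A(1) B(1)] by simp
      then show ?thesis using A B by blast
    qed
  qed
  have ok: "\<And>G. G \<in> C \<Longrightarrow> hb_ok p G" using sub by blast
  have "hb_ok p (\<Union>C)"
    unfolding hb_ok_def
  proof (intro conjI allI impI)
    fix x a y b assume "(x,a) \<in> \<Union>C" "(y,b) \<in> \<Union>C"
    then obtain G where G: "G\<in>C" "(x,a)\<in>G" "(y,b)\<in>G" using two by meson
    then have "(x+y,a+b) \<in> G" using hb_add[OF ok] by blast
    then show "(x+y,a+b) \<in> \<Union>C" using G by blast
  next
    fix x a c assume "(x,a) \<in> \<Union>C"
    then obtain G where G: "G\<in>C" "(x,a)\<in>G" by (rule UnionE)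
    then have "(c *\<^sub>R x, c*a) \<in> G" using hb_sc[OF ok] by blast
    then show "(c *\<^sub>R x, c*a) \<in> \<Union>C" using G by blast
  next
    fix x a b assume "(x,a) \<in> \<Union>C" "(x,b) \<in> \<Union>C"
    then obtain G where G: "G\<in>C" "(x,a)\<in>G" "(x,b)\<in>G" using two by meson
    then show "a = b" using hb_fun[OF ok] by blast
  next
    fix x a assume "(x,a) \<in> \<Union>C"
    then obtain G where G: "G\<in>C" "(x,a)\<in>G" by (rule UnionE)
    then show "a \<le> p x" using hb_p[OF ok] by blast
  qed
  moreover have "G0 \<subseteq> \<Union>C"
  proof -
    obtain G where "G \<in> C" using assms(2) by blast
    then show ?thesis using sub by blast
  qed
  ultimately show ?thesis by blast
qed

lemma hb_extend:
  fixes p :: "'z::real_vector \<Rightarrow> real"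
  assumes sub: "\<And>x y. p (x+y) \<le> p x + p y"
    and hom: "\<And>x r. r > 0 \<Longrightarrow> p (r *\<^sub>R x) = r * p x"
    and M: "hb_ok p M" and M0: "(0,0) \<in> M"
    and x1: "\<And>a. (x1,a) \<notin> M"
  shows "\<exists>M'. hb_ok p M' \<and> M \<subseteq> M' \<and> M' \<noteq> M"
proof -
  have Madd: "\<And>x a y b. (x,a)\<in>M \<Longrightarrow> (y,b)\<in>M \<Longrightarrow> (x+y, a+b) \<in> M"
    and Msc: "\<And>x a c. (x,a)\<in>M \<Longrightarrow> (c *\<^sub>R x, c*a) \<in> M"
    and Mfun: "\<And>x a b. (x,a)\<in>M \<Longrightarrow> (x,b)\<in>M \<Longrightarrow> a = b"
    and Mp: "\<And>x a. (x,a)\<in>M \<Longrightarrow> a \<le> p x"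
    using hb_okD[OF M] by blast+
  define S where "S = {a - p (x - x1) | x a. (x,a) \<in> M}"
  define c where "c = Sup S"
  have key: "a - p (x - x1) \<le> p (y + x1) - b" if "(x,a)\<in>M" "(y,b)\<in>M" for x a y b
  proof -
    have "a + b \<le> p (x + y)" using Mp[OF Madd[OF that]] .
    also have "x + y = (x - x1) + (y + x1)" by simp
    also have "p \<dots> \<le> p (x - x1) + p (y + x1)" by (rule sub)
    finally show ?thesis by simp
  qed
  have Sne: "S \<noteq> {}" using M0 unfolding S_def by blast
  have Sbdd: "bdd_above S" unfolding S_def bdd_above_def
    using key[OF _ M0] by auto
  have cge: "a - p (x - x1) \<le> c" if "(x,a)\<in>M" for x a
    unfolding c_def using Sbdd that by (intro cSup_upper) (auto simp: S_def)
  have cle: "c \<le> p (y + x1) - b" if "(y,b)\<in>M" for y b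
    unfolding c_def using Sne by (intro cSup_least) (auto simp: S_def intro: key[OF _ that])
  define M' where "M' = {(x + t *\<^sub>R x1, a + t*c) | x a t. (x,a) \<in> M}"
  have "hb_ok p M'"
    unfolding hb_ok_def
  proof (intro conjI allI impI)
    fix u a v b assume "(u,a) \<in> M'" "(v,b) \<in> M'"
    then obtain x a0 t y b0 s where "(x,a0)\<in>M" "(y,b0)\<in>M" "u = x + t *\<^sub>R x1" "a = a0 + t*c"
      "v = y + s *\<^sub>R x1" "b = b0 + s*c" unfolding M'_def by blast
    then show "(u+v, a+b) \<in> M'" unfolding M'_def
      by (intro CollectI exI[of _ "x+y"] exI[of _ "a0+b0"] exI[of _ "t+s"])
         (auto simp: Madd algebra_simps)
  next
    fix u a r assume "(u,a) \<in> M'"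
    then obtain x a0 t where "(x,a0)\<in>M" "u = x + t *\<^sub>R x1" "a = a0 + t*c"
      unfolding M'_def by blast
    then have "(r *\<^sub>R u, r*a) = (r *\<^sub>R x + (r*t) *\<^sub>R x1, r*a0 + (r*t)*c)"
      by (simp add: algebra_simps)
    moreover have "(r *\<^sub>R x, r*a0) \<in> M" using Msc \<open>(x,a0)\<in>M\<close> by blast
    ultimately show "(r *\<^sub>R u, r*a) \<in> M'" unfolding M'_def by blast
  next
    fix u a b assume "(u,a) \<in> M'" "(u,b) \<in> M'"
    then obtain x a0 t y b0 s where xa: "(x,a0)\<in>M" and yb: "(y,b0)\<in>M" and e1: "u = x + t *\<^sub>R x1" "a = a0 + t*c"
      and e2: "u = y + s *\<^sub>R x1" "b = b0 + s*c" unfolding M'_def by blast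
    have "t = s"
    proof (rule ccontr)
      assume ts: "t \<noteq> s"
      have d: "(x - y, a0 - b0) \<in> M" using Madd[OF xa Msc[OF yb, of "-1"]] by simp
      have "x - y = (s - t) *\<^sub>R x1" using e1 e2 by (simp add: algebra_simps)
      then have xx: "x1 = (1/(s-t)) *\<^sub>R (x - y)" using ts by simp
      have "(x1, (1/(s-t)) * (a0 - b0)) \<in> M" unfolding xx by (rule Msc[OF d])
      then show False using x1 by blast
    qed
    then have "x = y" using e1 e2 by simp
    then have "a0 = b0" using Mfun xa yb by blast
    then show "a = b" using e1 e2 \<open>t = s\<close> by simp
  next
    fix u a assume "(u,a) \<in> M'"
    then obtain x a0 t where xa: "(x,a0)\<in>M" and e: "u = x + t *\<^sub>R x1" "a = a0 + t*c"
      unfolding M'_def by blast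
    show "a \<le> p u"
    proof (cases "t > 0")
      case True
      have "((1/t) *\<^sub>R x, (1/t)*a0) \<in> M" using Msc[OF xa] .
      from cle[OF this] have "t * c \<le> t * (p ((1/t) *\<^sub>R x + x1) - (1/t)*a0)"
        using True by (intro mult_left_mono) auto
      also have "\<dots> = p (t *\<^sub>R ((1/t) *\<^sub>R x + x1)) - a0"
        using True hom[OF True, of "(1/t) *\<^sub>R x + x1"] by (simp add: right_diff_distrib)
      also have "t *\<^sub>R ((1/t) *\<^sub>R x + x1) = u" using True e by (simp add: scaleR_add_right)
      finally show ?thesis using e by simp
    next
      case False
      show ?thesis
      proof (cases "t = 0")
        case True then show ?thesis using e Mp[OF xa] by simp
      next
        case t0: False
        with False have tn: "t < 0" by simp
        have "((-1/t) *\<^sub>R x, (-1/t)*a0) \<in> M" using Msc[OF xa] .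
        from cge[OF this] have "(-t) * ((-1/t)*a0 - p ((-1/t) *\<^sub>R x - x1)) \<le> (-t) * c"
          using tn by (intro mult_left_mono) auto
        then have "a0 + t * c \<le> (-t) * p ((-1/t) *\<^sub>R x - x1)"
          using tn by (simp add: right_diff_distrib)
        also have "\<dots> = p ((-t) *\<^sub>R ((-1/t) *\<^sub>R x - x1))"
          using tn hom[of "-t" "(-1/t) *\<^sub>R x - x1"] by simp
        also have "(-t) *\<^sub>R ((-1/t) *\<^sub>R x - x1) = u" using tn e by (simp add: scaleR_diff_right)
        finally show ?thesis using e by simp
      qed
    qed
  qed
  moreover have "M \<subseteq> M'"
  proof (rule subsetI)
    fix w assume "w \<in> M"
    moreover obtain x a where "w = (x,a)" by fastforce
    ultimately show "w \<in> M'" unfolding M'_def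
      by (intro CollectI exI[of _ x] exI[of _ a] exI[of _ 0]) simp
  qed
  moreover have "(x1, c) \<in> M'" unfolding M'_def using M0
    by (intro CollectI exI[of _ 0] exI[of _ 0] exI[of _ 1]) simp
  ultimately show ?thesis using x1 by blast
qed


lemma hahn_banach:
  fixes p :: "'z::real_vector \<Rightarrow> real"
  assumes sub: "\<And>x y. p (x+y) \<le> p x + p y"
    and hom: "\<And>x r. r > 0 \<Longrightarrow> p (r *\<^sub>R x) = r * p x"
    and G0: "hb_ok p G0" and G0ne: "G0 \<noteq> {}"
  shows "\<exists>L. linear L \<and> (\<forall>x. L x \<le> p x) \<and> (\<forall>x a. (x,a) \<in> G0 \<longrightarrow> L x = a)"
proof -
  define A where "A = {G. hb_ok p G \<and> G0 \<subseteq> G}"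
  have "\<forall>C\<in>chains A. \<exists>U\<in>A. \<forall>X\<in>C. X \<subseteq> U"
  proof
    fix C assume C: "C \<in> chains A"
    show "\<exists>U\<in>A. \<forall>X\<in>C. X \<subseteq> U"
    proof (cases "C = {}")
      case True then show ?thesis using G0 unfolding A_def by blast
    next
      case False
      then have "\<Union>C \<in> A" using hb_chain[OF C[unfolded A_def]] unfolding A_def by blast
      then show ?thesis by blast
    qed
  qed
  from Zorn_Lemma2[OF this] obtain M where MA: "M \<in> A" and max: "\<And>X. X \<in> A \<Longrightarrow> M \<subseteq> X \<Longrightarrow> X = M"
    by blast
  have M: "hb_ok p M" and GM: "G0 \<subseteq> M" using MA unfolding A_def by auto
  obtain x0 a0 where "(x0,a0) \<in> G0" using G0ne by auto
  then have "(0 *\<^sub>R x0, 0*a0) \<in> M" using GM hb_sc[OF M] by blast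
  then have M0: "(0,0) \<in> M" by simp
  have tot: "\<exists>a. (x,a) \<in> M" for x
  proof (rule ccontr)
    assume "\<nexists>a. (x, a) \<in> M"
    then obtain M' where "hb_ok p M'" "M \<subseteq> M'" "M' \<noteq> M"
      using hb_extend[OF sub hom M M0] by blast
    moreover have "M' \<in> A" using calculation GM unfolding A_def by blast
    ultimately show False using max by blast
  qed
  define L where "L x = (THE a. (x,a) \<in> M)" for x
  have Lmem: "(x, L x) \<in> M" for x
  proof -
    obtain a where a: "(x,a) \<in> M" using tot by blast
    have "\<exists>!a. (x,a) \<in> M" using a hb_fun[OF M] by blast
    then show ?thesis unfolding L_def by (rule theI')
  qed
  have Leq: "L x = a" if "(x,a) \<in> M" for x a
    using hb_fun[OF M Lmem that] .
  have "linear L"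
  proof (rule linearI)
    fix b1 b2 show "L (b1 + b2) = L b1 + L b2"
      using Leq[OF hb_add[OF M Lmem Lmem]] .
  next
    fix r b show "L (r *\<^sub>R b) = r *\<^sub>R L b"
      using Leq[OF hb_sc[OF M Lmem]] by simp
  qed
  moreover have "\<forall>x. L x \<le> p x" using hb_p[OF M Lmem] by blast
  moreover have "\<forall>x a. (x,a) \<in> G0 \<longrightarrow> L x = a" using Leq GM by blast
  ultimately show ?thesis by blast
qed




context
  fixes dummy :: "'z::{real_vector,t2_space} itself"
  assumes lc: "lc_tvs TYPE('z)"
begin

lemma tvs_add_cont:
  fixes f g :: "'a::topological_space \<Rightarrow> 'z"
  assumes "continuous_on S f" "continuous_on S g"
  shows "continuous_on S (\<lambda>x. f x + g x)"
proof -
  have c: "continuous_on UNIV (\<lambda>p::'z \<times> 'z. fst p + snd p)" using lc unfolding lc_tvs_def by blast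
  have "continuous_on S (\<lambda>x. (f x, g x))" using assms by (intro continuous_on_Pair)
  from continuous_on_compose2[OF c this] show ?thesis by simp
qed

lemma tvs_scale_cont:
  fixes f :: "'a::topological_space \<Rightarrow> 'z" and a :: "'a \<Rightarrow> real"
  assumes "continuous_on S a" "continuous_on S f"
  shows "continuous_on S (\<lambda>x. a x *\<^sub>R f x)"
proof -
  have c: "continuous_on UNIV (\<lambda>p::real \<times> 'z. fst p *\<^sub>R snd p)" using lc unfolding lc_tvs_def by blast
  have "continuous_on S (\<lambda>x. (a x, f x))" using assms by (intro continuous_on_Pair)
  from continuous_on_compose2[OF c this] show ?thesis by simp
qed

lemma tvs_affine_cont: "continuous_on UNIV (\<lambda>w::'z. r *\<^sub>R (w + c))"
  by (intro tvs_scale_cont tvs_add_cont continuous_on_const continuous_on_id)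

lemma tvs_open_affine: "open (U::'z set) \<Longrightarrow> open ((\<lambda>w. r *\<^sub>R (w + c)) -` U)"
  by (rule open_vimage[OF _ tvs_affine_cont])

lemma tvs_line_cont: "continuous_on UNIV (\<lambda>t::real. t *\<^sub>R (x::'z))"
  by (intro tvs_scale_cont continuous_on_const continuous_on_id)

lemma tvs_line_open:
  assumes "open (U::'z set)" "t0 *\<^sub>R x \<in> U"
  shows "\<exists>e>0. \<forall>t. \<bar>t - t0\<bar> < e \<longrightarrow> t *\<^sub>R x \<in> U"
proof -
  have "open ((\<lambda>t::real. t *\<^sub>R x) -` U)" by (rule open_vimage[OF assms(1) tvs_line_cont])
  then obtain e where "e > 0" "\<forall>t. dist t t0 < e \<longrightarrow> t \<in> (\<lambda>t::real. t *\<^sub>R x) -` U"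
    using assms(2) unfolding open_dist by blast
  then show ?thesis by (auto simp: dist_real_def)
qed

lemma tvs_closure_convex:
  fixes S :: "'z set"
  assumes "convex S"
  shows "convex (closure S)"
proof (rule convexI)
  fix x y and u v :: real assume xy: "x \<in> closure S" "y \<in> closure S" and uv: "0 \<le> u" "0 \<le> v" "u + v = 1"
  define h where "h = (\<lambda>q::'z\<times>'z. u *\<^sub>R fst q + v *\<^sub>R snd q)"
  have hc: "continuous_on UNIV h" unfolding h_def
    by (intro tvs_add_cont tvs_scale_cont continuous_on_const continuous_on_fst continuous_on_snd continuous_on_id)
  have "h ` (S \<times> S) \<subseteq> closure S"
    using convexD[OF assms _ _ uv] closure_subset unfolding h_def by fastforce
  then have "h ` closure (S \<times> S) \<subseteq> closure S"
    by (intro image_closure_subset continuous_on_subset[OF hc]) auto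
  moreover have "(x,y) \<in> closure (S \<times> S)" using xy by (simp add: closure_Times)
  ultimately show "u *\<^sub>R x + v *\<^sub>R y \<in> closure S" unfolding h_def by force
qed

end




definition mink :: "'z::real_vector set \<Rightarrow> 'z \<Rightarrow> real" where
  "mink E x = Inf {r. 0 < r \<and> (1/r) *\<^sub>R x \<in> E}"

context
  fixes E :: "'z::real_vector set"
  assumes cvx: "convex E" and E0: "0 \<in> E" and absorb: "\<And>x. \<exists>r>0. (1/r) *\<^sub>R x \<in> E"
begin

lemma mink_ne: "{r. 0 < r \<and> (1/r) *\<^sub>R x \<in> E} \<noteq> {}"
  using absorb[of x] by blast

lemma mink_bdd: "bdd_below {r. 0 < r \<and> (1/r) *\<^sub>R x \<in> E}"
  by (rule bdd_belowI[of _ 0]) auto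

lemma mink_nonneg: "0 \<le> mink E x"
  unfolding mink_def by (rule cInf_greatest[OF mink_ne]) auto

lemma mink_le: "0 < r \<Longrightarrow> (1/r) *\<^sub>R x \<in> E \<Longrightarrow> mink E x \<le> r"
  unfolding mink_def by (rule cInf_lower[OF _ mink_bdd]) auto

lemma mink_up:
  assumes "0 < r" "r \<le> s" "(1/r) *\<^sub>R x \<in> E"
  shows "(1/s) *\<^sub>R x \<in> E"
proof -
  have s: "0 < s" using assms by simp
  have "(r/s) *\<^sub>R ((1/r) *\<^sub>R x) + (1 - r/s) *\<^sub>R 0 \<in> E"
    using convexD[OF cvx assms(3) E0, of "r/s" "1 - r/s"] assms s by simp
  moreover have "(r/s) *\<^sub>R ((1/r) *\<^sub>R x) = (1/s) *\<^sub>R x" using assms(1) by simp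
  ultimately show ?thesis by (metis add_0_right scaleR_zero_right)
qed

lemma mink_sum:
  assumes "0 < r" "(1/r) *\<^sub>R x \<in> E" "0 < s" "(1/s) *\<^sub>R y \<in> E"
  shows "(1/(r+s)) *\<^sub>R (x + y) \<in> E"
proof -
  have "(r/(r+s)) *\<^sub>R ((1/r) *\<^sub>R x) + (s/(r+s)) *\<^sub>R ((1/s) *\<^sub>R y) \<in> E"
    using convexD[OF cvx assms(2) assms(4), of "r/(r+s)" "s/(r+s)"] assms
    by (simp add: add_divide_distrib[symmetric])
  moreover have "(r/(r+s)) *\<^sub>R ((1/r) *\<^sub>R x) + (s/(r+s)) *\<^sub>R ((1/s) *\<^sub>R y) = (1/(r+s)) *\<^sub>R (x + y)"
    using assms by (simp add: scaleR_add_right)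
  ultimately show ?thesis by simp
qed

lemma mink_subadd: "mink E (x + y) \<le> mink E x + mink E y"
proof -
  have "mink E (x + y) - s \<le> mink E x" if s: "0 < s" "(1/s) *\<^sub>R y \<in> E" for s
  proof -
    have "mink E (x + y) - s \<le> r" if r: "0 < r" "(1/r) *\<^sub>R x \<in> E" for r
      using mink_le[OF _ mink_sum[OF r s]] r s by simp
    then show ?thesis unfolding mink_def[of E x] by (intro cInf_greatest[OF mink_ne]) auto
  qed
  then have "mink E (x + y) - mink E x \<le> s" if "0 < s" "(1/s) *\<^sub>R y \<in> E" for s
    using that by fastforce
  then have "mink E (x + y) - mink E x \<le> mink E y"
    unfolding mink_def[of E y] by (intro cInf_greatest[OF mink_ne]) auto
  then show ?thesis by simp
qed

lemma mink_hom:
  assumes t: "0 < t"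
  shows "mink E (t *\<^sub>R x) = t * mink E x"
proof (rule antisym)
  have "mink E (t *\<^sub>R x) / t \<le> r" if r: "0 < r" "(1/r) *\<^sub>R x \<in> E" for r
  proof -
    have "(1/(t*r)) *\<^sub>R (t *\<^sub>R x) = (1/r) *\<^sub>R x" using t by simp
    then have "mink E (t *\<^sub>R x) \<le> t * r" using mink_le[of "t*r" "t *\<^sub>R x"] r t by simp
    then show ?thesis using t by (simp add: divide_le_eq mult.commute)
  qed
  then have "mink E (t *\<^sub>R x) / t \<le> mink E x"
    unfolding mink_def[of E x] by (intro cInf_greatest[OF mink_ne]) auto
  then show "mink E (t *\<^sub>R x) \<le> t * mink E x" using t by (simp add: divide_le_eq mult.commute)
next
  have "t * mink E x \<le> r" if r: "0 < r" "(1/r) *\<^sub>R (t *\<^sub>R x) \<in> E" for r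
  proof -
    have "(1/(r/t)) *\<^sub>R x = (1/r) *\<^sub>R (t *\<^sub>R x)" using t by simp
    then have "mink E x \<le> r / t" using mink_le[of "r/t" x] r t by simp
    then show ?thesis using t by (simp add: le_divide_eq mult.commute)
  qed
  then show "t * mink E x \<le> mink E (t *\<^sub>R x)"
    unfolding mink_def[of E "t *\<^sub>R x"] by (intro cInf_greatest[OF mink_ne]) auto
qed

lemma mink_lt1_mem:
  assumes "mink E y < 1"
  shows "y \<in> E"
proof -
  obtain r where r: "0 < r" "(1/r) *\<^sub>R y \<in> E" "r < 1"
    using cInf_lessD[OF mink_ne, of y 1] assms unfolding mink_def by blast
  show ?thesis using mink_up[OF r(1) _ r(2), of 1] r by simp
qed

end




context
  fixes dummy :: "'z::{real_vector,t2_space} itself"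
  assumes lc: "lc_tvs TYPE('z)"
begin

lemma tvs_absorb:
  assumes "open (E::'z set)" "0 \<in> E"
  shows "\<exists>d>0. d *\<^sub>R x \<in> E"
proof -
  obtain e where "e > 0" "\<forall>t. \<bar>t - 0\<bar> < e \<longrightarrow> t *\<^sub>R x \<in> E"
    using tvs_line_open[OF lc assms(1), of 0 x] assms(2) by auto
  then show ?thesis by (intro exI[of _ "e/2"]) auto
qed

lemma tvs_absorb':
  assumes "open (E::'z set)" "0 \<in> E"
  shows "\<exists>r>0. (1/r) *\<^sub>R x \<in> E"
proof -
  obtain d where "d > 0" "d *\<^sub>R x \<in> E" using tvs_absorb[OF assms] by blast
  then show ?thesis by (intro exI[of _ "1/d"]) auto
qed

lemma mink_lt1:
  assumes "open (E::'z set)" "convex E" "0 \<in> E" "x \<in> E"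
  shows "mink E x < 1"
proof -
  obtain e where e: "e > 0" "\<forall>t. \<bar>t - 1\<bar> < e \<longrightarrow> t *\<^sub>R x \<in> E"
    using tvs_line_open[OF lc assms(1), of 1 x] assms(4) by auto
  then have "(1 + e/2) *\<^sub>R x \<in> E" by auto
  then have m: "(1 / (1/(1+e/2))) *\<^sub>R x \<in> E" by simp
  have pos: "0 < 1/(1+e/2)" using e(1) by simp
  have "mink E x \<le> 1/(1+e/2)"
    using mink_le[OF assms(2) assms(3) tvs_absorb'[OF assms(1) assms(3)] pos m] .
  also have "\<dots> < 1" using e(1) by simp
  finally show ?thesis .
qed

lemma tvs_separation:
  fixes K :: "'z set"
  assumes "closed K" "convex K" "K \<noteq> {}" "z \<notin> K"
  shows "\<exists>L::'z \<Rightarrow> real. linear L \<and> continuous_on UNIV L \<and> (\<exists>\<delta>>0. \<forall>k\<in>K. L k \<le> L z - \<delta>)"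
proof -
  define U where "U = (\<lambda>w. 1 *\<^sub>R (w + z)) -` (- K)"
  have Uo: "open U" unfolding U_def using assms(1) by (intro tvs_open_affine[OF lc]) (simp add: open_Compl)
  have U0: "0 \<in> U" using assms(4) unfolding U_def by simp
  obtain V where V: "open V" "convex V" "0 \<in> V" "V \<subseteq> U"
    using lc Uo U0 unfolding lc_tvs_def by blast
  define W where "W = V \<inter> (\<lambda>w. (-1) *\<^sub>R (w + 0)) -` V"
  have Wo: "open W" unfolding W_def by (intro open_Int V(1) tvs_open_affine[OF lc])
  have W0: "0 \<in> W" using V(3) by (simp add: W_def)
  have "convex ((\<lambda>w. (-1) *\<^sub>R (w + 0)) -` V)"
  proof (rule convexI)
    fix a b and u v :: real
    assume "a \<in> (\<lambda>w. (-1) *\<^sub>R (w + 0)) -` V" "b \<in> (\<lambda>w. (-1) *\<^sub>R (w + 0)) -` V" "0 \<le> u" "0 \<le> v" "u + v = 1"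
    then have "u *\<^sub>R (-a) + v *\<^sub>R (-b) \<in> V" using convexD[OF V(2), of "-a" "-b" u v] by simp
    then show "u *\<^sub>R a + v *\<^sub>R b \<in> (\<lambda>w. (-1) *\<^sub>R (w + 0)) -` V" by (simp add: algebra_simps)
  qed
  then have Wc: "convex W" unfolding W_def using V(2) by (rule convex_Int[rotated])
  have Wneg: "\<And>w. w \<in> W \<Longrightarrow> -w \<in> V" by (simp add: W_def)
  obtain k0 where k0: "k0 \<in> K" using assms(3) by blast
  define E where "E = {k - k0 + w | k w. k \<in> K \<and> w \<in> W}"
  have E_eq: "E = (\<Union>k\<in>K. (\<lambda>v. 1 *\<^sub>R (v + (k0 - k))) -` W)"
  proof (rule set_eqI, rule iffI)
    fix v assume "v \<in> E"
    then obtain k w where "k \<in> K" "w \<in> W" "v = k - k0 + w" unfolding E_def by blast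
    then show "v \<in> (\<Union>k\<in>K. (\<lambda>v. 1 *\<^sub>R (v + (k0 - k))) -` W)"
      by (intro UN_I[of k]) auto
  next
    fix v assume "v \<in> (\<Union>k\<in>K. (\<lambda>v. 1 *\<^sub>R (v + (k0 - k))) -` W)"
    then obtain k where "k \<in> K" "v + (k0 - k) \<in> W" by auto
    moreover have "v = k - k0 + (v + (k0 - k))" by simp
    ultimately show "v \<in> E" unfolding E_def by blast
  qed
  have Eo: "open E" unfolding E_eq using Wo by (intro open_UN ballI tvs_open_affine[OF lc])
  have E0: "0 \<in> E" unfolding E_def using k0 W0 by (intro CollectI exI[of _ k0] exI[of _ 0]) simp
  have Ec: "convex E"
  proof (rule convexI)
    fix a b and u v :: real
    assume ab: "a \<in> E" "b \<in> E" and uv: "0 \<le> u" "0 \<le> v" "u + v = 1"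
    obtain k1 w1 where 1: "k1 \<in> K" "w1 \<in> W" "a = k1 - k0 + w1" using ab(1) unfolding E_def by blast
    obtain k2 w2 where 2: "k2 \<in> K" "w2 \<in> W" "b = k2 - k0 + w2" using ab(2) unfolding E_def by blast
    have v: "v = 1 - u" using uv by simp
    have "u *\<^sub>R a + v *\<^sub>R b = (u *\<^sub>R k1 + v *\<^sub>R k2) - k0 + (u *\<^sub>R w1 + v *\<^sub>R w2)"
      unfolding 1(3) 2(3) v by (simp add: algebra_simps)
    moreover have "u *\<^sub>R k1 + v *\<^sub>R k2 \<in> K" using convexD[OF assms(2) 1(1) 2(1) uv] .
    moreover have "u *\<^sub>R w1 + v *\<^sub>R w2 \<in> W" using convexD[OF Wc 1(2) 2(2) uv] .
    ultimately show "u *\<^sub>R a + v *\<^sub>R b \<in> E" unfolding E_def by blast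
  qed
  define y where "y = z - k0"
  have yE: "y \<notin> E"
  proof
    assume "y \<in> E"
    then obtain k w where kw: "k \<in> K" "w \<in> W" "z - k0 = k - k0 + w" unfolding E_def y_def by blast
    have "-w \<in> U" using Wneg[OF kw(2)] V(4) by blast
    then have "-w + z \<notin> K" unfolding U_def by simp
    moreover have "-w + z = k" using kw(3) by (simp add: algebra_simps)
    ultimately show False using kw(1) by simp
  qed
  have y0: "y \<noteq> 0" using yE E0 by auto
  have absE: "\<And>x. \<exists>r>0. (1/r) *\<^sub>R x \<in> E" using tvs_absorb'[OF Eo E0] .
  define p where "p = mink E"
  have psub: "\<And>x y. p (x+y) \<le> p x + p y" unfolding p_def by (rule mink_subadd[OF Ec E0 absE])
  have phom: "\<And>x r. r > 0 \<Longrightarrow> p (r *\<^sub>R x) = r * p x" unfolding p_def by (rule mink_hom[OF Ec E0 absE])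
  have pnn: "\<And>x. 0 \<le> p x" unfolding p_def by (rule mink_nonneg[OF Ec E0 absE])
  have py: "1 \<le> p y"
  proof (rule ccontr)
    assume "\<not> 1 \<le> p y"
    then have "y \<in> E" unfolding p_def using mink_lt1_mem[OF Ec E0 absE] by simp
    then show False using yE by simp
  qed
  define G0 where "G0 = {(s *\<^sub>R y, s) | s. True}"
  have G0ok: "hb_ok p G0" unfolding hb_ok_def
  proof (intro conjI allI impI)
    fix x a x' b assume "(x,a) \<in> G0" "(x',b) \<in> G0"
    then have "x = a *\<^sub>R y" "x' = b *\<^sub>R y" unfolding G0_def by auto
    then show "(x + x', a + b) \<in> G0" unfolding G0_def by (auto simp: scaleR_add_left)
  next
    fix x a c assume "(x,a) \<in> G0"
    then have "x = a *\<^sub>R y" unfolding G0_def by auto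
    then show "(c *\<^sub>R x, c * a) \<in> G0" unfolding G0_def by auto
  next
    fix x a b assume "(x,a) \<in> G0" "(x,b) \<in> G0"
    then have "x = a *\<^sub>R y" "x = b *\<^sub>R y" unfolding G0_def by auto
    then show "a = b" using y0 by (metis scaleR_cancel_right)
  next
    fix x a assume "(x,a) \<in> G0"
    then have x: "x = a *\<^sub>R y" unfolding G0_def by auto
    show "a \<le> p x"
    proof (cases "a > 0")
      case True
      then have "p x = a * p y" using phom x by simp
      moreover have "a \<le> a * p y" using True py by simp
      ultimately show ?thesis by simp
    next
      case False then show ?thesis using pnn[of x] by simp
    qed
  qed
  have G0ne: "G0 \<noteq> {}" unfolding G0_def by blast
  obtain L where L: "linear L" "\<And>x. L x \<le> p x" "\<And>x a. (x,a) \<in> G0 \<Longrightarrow> L x = a"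
    using hahn_banach[OF psub phom G0ok G0ne] by blast
  have Ladd: "\<And>a b. L (a + b) = L a + L b" and Lsc: "\<And>c a. L (c *\<^sub>R a) = c * L a"
    using L(1) unfolding linear_iff by auto
  have Ldiff: "\<And>a b. L (a - b) = L a - L b" using Ladd[of "a - b" b for a b] by (simp add: algebra_simps)
  have Ly: "L y = 1" using L(3)[of "1 *\<^sub>R y" 1] unfolding G0_def by auto
  have LE: "\<And>e. e \<in> E \<Longrightarrow> L e < 1"
    using L(2) mink_lt1[OF Eo Ec E0] unfolding p_def by (meson le_less_trans)
  define N where "N = E \<inter> (\<lambda>w. (-1) *\<^sub>R (w + 0)) -` E"
  have No: "open N" unfolding N_def by (intro open_Int Eo tvs_open_affine[OF lc])
  have N0: "0 \<in> N" using E0 by (simp add: N_def)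
  have LN: "\<bar>L n\<bar> < 1" if "n \<in> N" for n
  proof -
    have "L n < 1" "L (-n) < 1" using LE that by (auto simp: N_def)
    moreover have "L (-n) = - L n" using Lsc[of "-1" n] by simp
    ultimately show ?thesis by simp
  qed
  have Lcont: "continuous_on UNIV L"
    unfolding continuous_on_topological
  proof (intro ballI allI impI)
    fix x B assume "open B" "L x \<in> B"
    then obtain e where e: "e > 0" "\<And>t. dist t (L x) < e \<Longrightarrow> t \<in> B"
      unfolding open_dist by blast
    define A where "A = (\<lambda>w. (1/e) *\<^sub>R (w + (-x))) -` N"
    have "open A" unfolding A_def using No by (rule tvs_open_affine[OF lc])
    moreover have "x \<in> A" unfolding A_def using N0 by simp
    moreover have "L w \<in> B" if "w \<in> A" for w
    proof -
      have n: "(1/e) *\<^sub>R (w - x) \<in> N" using that unfolding A_def by simp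
      have "w = x + e *\<^sub>R ((1/e) *\<^sub>R (w - x))" using e(1) by simp
      then have "L w = L x + e * L ((1/e) *\<^sub>R (w - x))" using Ladd Lsc by metis
      then have "\<bar>L w - L x\<bar> = e * \<bar>L ((1/e) *\<^sub>R (w - x))\<bar>" using e(1) by (simp add: abs_mult)
      also have "\<dots> < e * 1" using LN[OF n] e(1) by (intro mult_strict_left_mono) auto
      finally show ?thesis using e(2) by (simp add: dist_real_def)
    qed
    ultimately show "\<exists>A. open A \<and> x \<in> A \<and> (\<forall>y\<in>UNIV. y \<in> A \<longrightarrow> L y \<in> B)" by blast
  qed
  obtain d where d: "d > 0" "d *\<^sub>R y \<in> W" using tvs_absorb[OF Wo W0] by blast
  have "L k \<le> L z - d" if "k \<in> K" for k
  proof -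
    have "k - k0 + d *\<^sub>R y \<in> E" unfolding E_def using that d(2) by blast
    then have "L (k - k0 + d *\<^sub>R y) < 1" by (rule LE)
    then have "L k - L k0 + d < 1" using Ladd Ldiff Lsc Ly by simp
    moreover have "L z - L k0 = 1" using Ly Ldiff unfolding y_def by simp
    ultimately show ?thesis by simp
  qed
  then have "\<forall>k\<in>K. L k \<le> L z - d" by blast
  then have "linear L \<and> continuous_on UNIV L \<and> (\<exists>\<delta>>0. \<forall>k\<in>K. L k \<le> L z - \<delta>)"
    using L(1) Lcont d(1) by blast
  then show ?thesis by blast
qed

end




lemma scal_le: "z \<in> A z0 \<Longrightarrow> scal_fun A L z0 \<le> ereal (- L z)"
  unfolding scal_fun_def by (rule Inf_lower) blast

lemma scal_ge: "(\<And>z. z \<in> f x \<Longrightarrow> b \<le> ereal (- L z)) \<Longrightarrow> b \<le> scal_fun f L x"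
  unfolding scal_fun_def by (rule Inf_greatest) blast

theorem mainTheorem1:
  fixes C :: "'z::{real_vector,t2_space} set"
    and f :: "'x::real_vector \<Rightarrow> 'z set"
    and x0 :: 'x
  assumes "lc_tvs TYPE('z)"
    and "closed_convex_cone C"
    and "neg_dual_cone C - {\<lambda>_. 0} \<noteq> {}"
    and "G_convex C f"
    and "x0 \<in> dom_G f"
  shows "(\<forall>x. \<forall>zs \<in> neg_dual_cone C - {\<lambda>_. 0}.
            scal_fun f zs x0 = -\<infinity> \<or> 0 \<le> dir_deriv (scal_fun f zs) x0 (x - x0))
         \<longleftrightarrow> f x0 = inf_image f"
proof
  have lc: "lc_tvs TYPE('z)" by fact
  have fG: "\<And>x. f x = closure (convex hull {a + c | a c. a \<in> f x \<and> c \<in> C})"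
    using assms(4) unfolding G_convex_def Gspace_def by blast
  have fconv: "\<And>x1 x2 t. 0 < t \<Longrightarrow> t < 1 \<Longrightarrow>
        oplus_set ((\<lambda>z. t *\<^sub>R z) ` f x1) ((\<lambda>z. (1 - t) *\<^sub>R z) ` f x2) \<subseteq> f (t *\<^sub>R x1 + (1 - t) *\<^sub>R x2)"
    using assms(4) unfolding G_convex_def by blast
  have ne: "f x0 \<noteq> {}" using assms(5) unfolding dom_G_def by blast
  have Kcl: "closed (f x0)" by (subst fG) (rule closed_closure)
  have Kcv: "convex (f x0)" by (subst fG) (rule tvs_closure_convex[OF lc convex_convex_hull])
  have KC: "k + c \<in> f x0" if "k \<in> f x0" "c \<in> C" for k c
  proof -
    have "k + c \<in> {a + c | a c. a \<in> f x0 \<and> c \<in> C}" using that by blast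
    then have "k + c \<in> closure (convex hull {a + c | a c. a \<in> f x0 \<and> c \<in> C})"
      by (rule subsetD[OF closure_subset, OF subsetD[OF hull_subset]])
    then show ?thesis by (subst fG)
  qed
  have Ccone: "cone C" using assms(2) unfolding closed_convex_cone_def by blast
  show "f x0 = inf_image f" if H: "\<forall>x. \<forall>zs \<in> neg_dual_cone C - {\<lambda>_. 0}.
            scal_fun f zs x0 = -\<infinity> \<or> 0 \<le> dir_deriv (scal_fun f zs) x0 (x - x0)"
  proof -
    have sub: "f x \<subseteq> f x0" for x
    proof
      fix z assume zx: "z \<in> f x"
      show "z \<in> f x0"
      proof (rule ccontr)
        assume zn: "z \<notin> f x0"
        obtain L :: "'z \<Rightarrow> real" and \<delta> where L: "linear L" "continuous_on UNIV L" "\<delta> > 0"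
          and Lsep: "\<And>k. k \<in> f x0 \<Longrightarrow> L k \<le> L z - \<delta>"
          using tvs_separation[OF lc Kcl Kcv ne zn] by blast
        have Ladd: "\<And>a b. L (a + b) = L a + L b" and Lsc: "\<And>c a. L (c *\<^sub>R a) = c * L a"
          using L(1) unfolding linear_iff by auto
        obtain k1 where k1: "k1 \<in> f x0" using ne by blast
        have LC: "L c \<le> 0" if c: "c \<in> C" for c
        proof (rule ccontr)
          assume "\<not> L c \<le> 0"
          then have pos: "L c > 0" by simp
          define n where "n = (L z - L k1) / L c + 1"
          have n0: "n \<ge> 0" using Lsep[OF k1] pos L(3) unfolding n_def by (simp add: divide_nonneg_pos)
          have "n *\<^sub>R c \<in> C" using Ccone c n0 unfolding cone_def by blast
          then have "L (k1 + n *\<^sub>R c) \<le> L z - \<delta>" using Lsep KC k1 by blast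
          then have "L k1 + n * L c \<le> L z - \<delta>" using Ladd Lsc by simp
          moreover have "n * L c = L z - L k1 + L c" using pos unfolding n_def by (simp add: field_simps)
          ultimately show False using pos L(3) by simp
        qed
        have Lnz: "L \<noteq> (\<lambda>_. 0)"
        proof
          assume "L = (\<lambda>_. 0)"
          then show False using Lsep[OF k1] L(3) by simp
        qed
        have Lin: "L \<in> neg_dual_cone C - {\<lambda>_. 0}"
          using L(1,2) LC Lnz unfolding neg_dual_cone_def top_dual_def by blast
        define \<phi> where "\<phi> = scal_fun f L"
        have phi0: "ereal (- L z + \<delta>) \<le> \<phi> x0"
          unfolding \<phi>_def
        proof (rule scal_ge)
          fix w assume "w \<in> f x0"
          from Lsep[OF this] show "ereal (- L z + \<delta>) \<le> ereal (- L w)" by simp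
        qed
        have phi0': "\<phi> x0 \<le> ereal (- L k1)" unfolding \<phi>_def by (rule scal_le[of _ f, OF k1])
        obtain a where a: "\<phi> x0 = ereal a"
          using phi0 phi0' by (cases "\<phi> x0") auto
        have dd: "0 \<le> dir_deriv \<phi> x0 (x - x0)"
        proof -
          have "scal_fun f L x0 = -\<infinity> \<or> 0 \<le> dir_deriv (scal_fun f L) x0 (x - x0)"
            using H Lin by blast
          then show ?thesis using a unfolding \<phi>_def by auto
        qed
        have "\<phi> x0 < ereal (a + \<delta>/2)" using a L(3) by simp
        then obtain z2 where z2: "z2 \<in> f x0" "- L z2 < a + \<delta>/2"
          unfolding \<phi>_def scal_fun_def Inf_less_iff by auto
        define mid where "mid = x0 + (1/2) *\<^sub>R (x - x0)"
        have "(1/2) *\<^sub>R z + (1 - 1/2) *\<^sub>R z2 \<in> {u + v | u v. u \<in> (\<lambda>z. (1/2) *\<^sub>R z) ` f x \<and> v \<in> (\<lambda>z. (1 - 1/2) *\<^sub>R z) ` f x0}"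
          using zx z2(1) by blast
        then have "(1/2) *\<^sub>R z + (1 - 1/2) *\<^sub>R z2 \<in> f ((1/2) *\<^sub>R x + (1 - 1/2) *\<^sub>R x0)"
          using subsetD[OF fconv[of "1/2" x x0, unfolded oplus_set_def], OF _ _ subsetD[OF closure_subset]]
          by simp
        moreover have "(1/2) *\<^sub>R x + (1 - 1/2) *\<^sub>R x0 = mid" unfolding mid_def
        proof -
          have h: "(1/2) *\<^sub>R x0 + (1/2) *\<^sub>R x0 = x0" by (simp flip: scaleR_add_left)
          show "(1/2) *\<^sub>R x + (1 - 1/2) *\<^sub>R x0 = x0 + (1/2) *\<^sub>R (x - x0)"
            using h by (simp add: algebra_simps)
        qed
        ultimately have zm: "(1/2) *\<^sub>R z + (1/2) *\<^sub>R z2 \<in> f mid" by simp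
        have "\<phi> mid \<le> ereal (- L ((1/2) *\<^sub>R z + (1/2) *\<^sub>R z2))" unfolding \<phi>_def by (rule scal_le[of _ f, OF zm])
        also have "- L ((1/2) *\<^sub>R z + (1/2) *\<^sub>R z2) = (1/2) * (- L z) + (1/2) * (- L z2)"
          using Ladd Lsc by simp
        also have "\<dots> \<le> a - \<delta>/4"
          using z2(2) phi0 a by simp
        finally have pm: "\<phi> mid \<le> ereal (a + (- \<delta>/4))" by simp
        have "inf_res (\<phi> mid) (\<phi> x0) \<le> ereal (- \<delta>/4)"
          unfolding inf_res_def a
        proof (rule Inf_lower)
          show "ereal (- \<delta>/4) \<in> {ereal t |t. \<phi> mid \<le> inf_add (ereal a) (ereal t)}"
            using pm by (auto simp: inf_add_def)
        qed
        have "dir_deriv \<phi> x0 (x - x0) \<le> ereal (1 / (1/2)) * inf_res (\<phi> (x0 + (1/2) *\<^sub>R (x - x0))) (\<phi> x0)"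
          unfolding dir_deriv_def by (rule INF_lower) simp
        also have "\<dots> \<le> ereal (1 / (1/2)) * ereal (- \<delta>/4)"
          using \<open>inf_res (\<phi> mid) (\<phi> x0) \<le> ereal (- \<delta>/4)\<close> unfolding mid_def
          by (intro ereal_mult_left_mono) auto
        also have "\<dots> < 0" using L(3) by simp
        finally show False using dd by simp
      qed
    qed
    have U: "(\<Union>x. f x) \<subseteq> f x0" using sub by blast
    have "convex hull (\<Union>x. f x) \<subseteq> f x0" by (rule hull_minimal[of _ _ convex, OF U Kcv])
    then have "inf_image f \<subseteq> f x0"
      unfolding inf_image_def by (rule closure_minimal[OF _ Kcl])
    moreover have "f x0 \<subseteq> inf_image f" unfolding inf_image_def
      by (rule subset_trans[OF _ closure_subset], rule subset_trans[OF _ hull_subset]) blast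
    ultimately show ?thesis by (rule subset_antisym[rotated])
  qed
next
  assume eq: "f x0 = inf_image f"
  have ne: "f x0 \<noteq> {}" using assms(5) unfolding dom_G_def by blast
  have sub: "f y \<subseteq> f x0" for y
    unfolding eq inf_image_def
    by (rule subset_trans[OF _ closure_subset], rule subset_trans[OF _ hull_subset]) blast
  show "\<forall>x. \<forall>zs \<in> neg_dual_cone C - {\<lambda>_. 0}.
            scal_fun f zs x0 = -\<infinity> \<or> 0 \<le> dir_deriv (scal_fun f zs) x0 (x - x0)"
  proof (intro allI ballI)
    fix x and zs :: "'z \<Rightarrow> real"
    define \<phi> where "\<phi> = scal_fun f zs"
    have mono: "\<phi> x0 \<le> \<phi> y" for y
      unfolding \<phi>_def
    proof (rule scal_ge)
      fix z assume "z \<in> f y"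
      then have "z \<in> f x0" using sub by blast
      then show "scal_fun f zs x0 \<le> ereal (- zs z)" by (rule scal_le[of _ f])
    qed
    obtain k1 where k1: "k1 \<in> f x0" using ne by blast
    have "\<phi> x0 \<le> ereal (- zs k1)" unfolding \<phi>_def by (rule scal_le[of _ f, OF k1])
    then have "\<phi> x0 \<noteq> \<infinity>" by auto
    show "scal_fun f zs x0 = -\<infinity> \<or> 0 \<le> dir_deriv (scal_fun f zs) x0 (x - x0)"
    proof (cases "\<phi> x0 = -\<infinity>")
      case True then show ?thesis unfolding \<phi>_def by simp
    next
      case False
      with \<open>\<phi> x0 \<noteq> \<infinity>\<close> obtain a where a: "\<phi> x0 = ereal a" by (cases "\<phi> x0") auto
      have "0 \<le> dir_deriv \<phi> x0 (x - x0)"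
        unfolding dir_deriv_def
      proof (rule INF_greatest)
        fix t :: real assume t: "t \<in> {0<..}"
        have "0 \<le> inf_res (\<phi> (x0 + t *\<^sub>R (x - x0))) (\<phi> x0)"
          unfolding inf_res_def a
        proof (rule Inf_greatest)
          fix r assume "r \<in> {ereal s |s. \<phi> (x0 + t *\<^sub>R (x - x0)) \<le> inf_add (ereal a) (ereal s)}"
          then obtain s where s: "r = ereal s" "\<phi> (x0 + t *\<^sub>R (x - x0)) \<le> inf_add (ereal a) (ereal s)"
            by blast
          have "\<phi> x0 \<le> inf_add (ereal a) (ereal s)"
            using order_trans[OF mono[of "x0 + t *\<^sub>R (x - x0)"] s(2)] .
          then have "ereal a \<le> ereal (a + s)" using a by (simp add: inf_add_def)
          then show "0 \<le> r" using s(1) by simp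
        qed
        then show "0 \<le> ereal (1/t) * inf_res (\<phi> (x0 + t *\<^sub>R (x - x0))) (\<phi> x0)"
          using t by simp
      qed
      then show ?thesis unfolding \<phi>_def by simp
    qed
  qed
qed


end
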